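(* Let $G$ be a reduced strongly co-Hopfian abelian group with torsion subgroup $T=\bigoplus_p T_p$. Then each $T_p$ is finite, and $G\cong \hat G$ for some subgroup $\hat G$ with $T\le \hat G\le \prod_p T_p$ (where $T$ is identified with $\bigoplus_p T_p\le\prod_p T_p$) such that $\hat G/T$ is torsion-free and divisible. In particular, if infinitely many $T_p$ are non-zero, $G$ is an sp-group.
   Context: All groups are abelian. A group $G$ is strongly co-Hopfian if for every endomorphism $f$ of $G$ there is $n\in\mathbb N$ with $f^n(G)=f^{n+1}(G)$. $T$ denotes the maximal torsion subgroup of $G$ and $T_p$ its $p$-primary component. A mixed group $G$ with infinitely many non-zero $p$-components $T_p$ is an sp-group if $G$ is (isomorphic to) a pure subgroup of $\prod_p T_p$ containing $\bigoplus_p T_p$. *)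

theory Defs
  imports Main "HOL-Computational_Algebra.Primes" "HOL-Library.Function_Algebras"
begin

text \<open>Abelian groups are modelled as types of class ab_group_add; the group G is the
whole type. Functions nat => 'a carry the pointwise group structure (Function_Algebras).\<close>

fun nmul :: "nat \<Rightarrow> 'a::ab_group_add \<Rightarrow> 'a" where
  "nmul 0 x = 0"
| "nmul (Suc n) x = x + nmul n x"

definition subgrp :: "'a::ab_group_add set \<Rightarrow> bool" where
  "subgrp S \<longleftrightarrow> 0 \<in> S \<and> (\<forall>x\<in>S. \<forall>y\<in>S. x + y \<in> S) \<and> (\<forall>x\<in>S. - x \<in> S)"

definition additive_map :: "('a::ab_group_add \<Rightarrow> 'b::ab_group_add) \<Rightarrow> bool" where
  "additive_map f \<longleftrightarrow> (\<forall>x y. f (x + y) = f x + f y)"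

definition strongly_co_Hopfian :: "'a::ab_group_add itself \<Rightarrow> bool" where
  "strongly_co_Hopfian _ \<longleftrightarrow>
     (\<forall>f :: 'a \<Rightarrow> 'a. additive_map f \<longrightarrow> (\<exists>n. range (f ^^ n) = range (f ^^ Suc n)))"

definition divisible_subgrp :: "'a::ab_group_add set \<Rightarrow> bool" where
  "divisible_subgrp D \<longleftrightarrow> subgrp D \<and> (\<forall>x\<in>D. \<forall>n>0. \<exists>y\<in>D. nmul n y = x)"

definition reduced_grp :: "'a::ab_group_add itself \<Rightarrow> bool" where
  "reduced_grp _ \<longleftrightarrow> (\<forall>D :: 'a set. divisible_subgrp D \<longrightarrow> D = {0})"

definition torsion_part :: "'a::ab_group_add set" where
  "torsion_part = {x. \<exists>n>0. nmul n x = 0}"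

definition ppart :: "nat \<Rightarrow> 'a::ab_group_add set" where
  "ppart p = {x. \<exists>k. nmul (p ^ k) x = 0}"

definition prodT :: "(nat \<Rightarrow> 'a::ab_group_add) set" where
  "prodT = {h. \<forall>p. (prime p \<longrightarrow> h p \<in> ppart p) \<and> (\<not> prime p \<longrightarrow> h p = 0)}"

definition sumT :: "(nat \<Rightarrow> 'a::ab_group_add) set" where
  "sumT = {h \<in> prodT. finite {p. h p \<noteq> 0}}"

definition isomorphic_to :: "'a::ab_group_add itself \<Rightarrow> 'b::ab_group_add set \<Rightarrow> bool" where
  "isomorphic_to _ H \<longleftrightarrow> (\<exists>\<phi> :: 'a \<Rightarrow> 'b. additive_map \<phi> \<and> inj \<phi> \<and> range \<phi> = H)"

definition pure_in :: "'a::ab_group_add set \<Rightarrow> 'a set \<Rightarrow> bool" where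
  "pure_in H P \<longleftrightarrow> (\<forall>n x. x \<in> H \<and> (\<exists>y\<in>P. x = nmul n y) \<longrightarrow> (\<exists>z\<in>H. x = nmul n z))"

definition quot_torsion_free :: "'a::ab_group_add set \<Rightarrow> 'a set \<Rightarrow> bool" where
  "quot_torsion_free H K \<longleftrightarrow> (\<forall>x\<in>H. \<forall>n>0. nmul n x \<in> K \<longrightarrow> x \<in> K)"

definition quot_divisible :: "'a::ab_group_add set \<Rightarrow> 'a set \<Rightarrow> bool" where
  "quot_divisible H K \<longleftrightarrow> (\<forall>x\<in>H. \<forall>n>0. \<exists>y\<in>H. nmul n y - x \<in> K)"

definition sp_group :: "'a::ab_group_add itself \<Rightarrow> bool" where
  "sp_group _ \<longleftrightarrow> infinite {p. prime p \<and> (ppart p :: 'a set) \<noteq> {0}} \<and>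
     (\<exists>H :: (nat \<Rightarrow> 'a) set. subgrp H \<and> sumT \<subseteq> H \<and> H \<subseteq> prodT \<and> pure_in H prodT
        \<and> isomorphic_to TYPE('a) H)"

end

theory Submission
  imports Defs
begin

lemma nmul_add_left: "nmul (m+n) x = nmul m x + nmul n x"
  by (induction m) (auto simp: algebra_simps)
lemma nmul_add_right: "nmul n (x+y) = nmul n x + nmul n y"
  by (induction n) (auto simp: algebra_simps)
lemma nmul_zero[simp]: "nmul n 0 = 0"
  by (induction n) auto
lemma nmul_one[simp]: "nmul 1 x = x" by simp
lemma nmul_mult: "nmul (m*n) x = nmul m (nmul n x)"
  by (induction m) (auto simp: nmul_add_left nmul_add_right)
lemma nmul_neg: "nmul n (-x) = - nmul n x"
  by (induction n) (auto simp: algebra_simps)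
lemma nmul_diff: "nmul n (x-y) = nmul n x - nmul n y"
  using nmul_add_right[of n x "-y"] nmul_neg[of n y] by simp
lemma nmul_sum: "nmul n (sum f A) = sum (\<lambda>i. nmul n (f i)) A"
  by (induction A rule: infinite_finite_induct) (auto simp: nmul_add_right)
lemma nmul_sub: "m \<le> n \<Longrightarrow> nmul (n-m) x = nmul n x - nmul m x"
  by (metis add_diff_cancel_left' le_add_diff_inverse nmul_add_left)
lemma nmul_fun: "nmul n (h::nat \<Rightarrow> 'a::ab_group_add) = (\<lambda>q. nmul n (h q))"
  by (induction n) (auto simp: plus_fun_def zero_fun_def)
lemma nmul_kill_dvd: assumes "nmul m x = 0" "m dvd n" shows "nmul n x = 0"
proof -
  obtain k where "n = k*m" using assms(2) by (metis dvdE mult.commute)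
  then show ?thesis using assms(1) by (simp add: nmul_mult)
qed
lemma nmul_mod: "nmul m x = 0 \<Longrightarrow> nmul n x = nmul (n mod m) x"
  by (metis add.left_neutral div_mult_mod_eq nmul_add_left nmul_mult nmul_zero mult.commute)

lemma nmul_gcd: assumes "nmul a x = 0" "nmul b x = 0" shows "nmul (gcd a b) x = 0"
proof (cases "a = 0")
  case True then show ?thesis using assms by simp
next
  case False
  then obtain u v where "a*u = b*v + gcd a b" using bezout_nat by blast
  then have "nmul (a*u) x = nmul (b*v) x + nmul (gcd a b) x" by (simp add: nmul_add_left)
  then show ?thesis using assms by (simp add: nmul_mult mult.commute[of a] mult.commute[of b])
qed

lemma nmul_coprime_kill: "nmul a x = 0 \<Longrightarrow> nmul b x = 0 \<Longrightarrow> coprime a b \<Longrightarrow> x = 0"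
  using nmul_gcd by fastforce

lemma nmul_inv: assumes "nmul P y = 0" "coprime u P"
  shows "\<exists>v. nmul (u*v) y = y"
proof (cases "u = 0")
  case True then have "P = 1" using assms by simp
  then show ?thesis using assms by simp
next
  case False
  then obtain v w where "u*v = P*w + gcd u P" using bezout_nat by blast
  then have "u*v = P*w + 1" using assms by simp
  then have "nmul (u*v) y = nmul (w*P) y + y" by (simp add: nmul_add_left mult.commute)
  also have "\<dots> = y" using assms by (simp add: nmul_mult)
  finally show ?thesis by blast
qed

lemma additive_0: "additive_map f \<Longrightarrow> f 0 = 0"
  unfolding additive_map_def by (metis add_cancel_right_right add_0)
lemma additive_neg: "additive_map f \<Longrightarrow> f (-x) = - f x"
  unfolding additive_map_def by (metis additive_0 add.right_inverse additive_map_def eq_neg_iff_add_eq_0)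
lemma additive_diff: assumes "additive_map f" shows "f (x-y) = f x - f y"
proof -
  have "f (x-y) = f (x + (-y))" by simp
  also have "\<dots> = f x + f (-y)" using assms unfolding additive_map_def by blast
  also have "\<dots> = f x - f y" using additive_neg[OF assms] by simp
  finally show ?thesis .
qed
lemma additive_nmul: assumes "additive_map f" shows "f (nmul n x) = nmul n (f x)"
proof (induction n)
  case 0 then show ?case using additive_0[OF assms] by simp
next
  case (Suc n)
  have "f (nmul (Suc n) x) = f (x + nmul n x)" by simp
  also have "\<dots> = f x + f (nmul n x)" using assms unfolding additive_map_def by blast
  finally show ?case using Suc by simp
qed
lemma additive_sum: assumes "additive_map f" shows "f (sum g A) = sum (\<lambda>i. f (g i)) A"
proof (induction A rule: infinite_finite_induct)
  case (insert x F)
  have "f (sum g (insert x F)) = f (g x + sum g F)" using insert by simp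
  also have "\<dots> = f (g x) + f (sum g F)" using assms unfolding additive_map_def by blast
  finally show ?case using insert by simp
qed (auto simp: additive_0[OF assms])

lemma subgrp_diff: "subgrp S \<Longrightarrow> x \<in> S \<Longrightarrow> y \<in> S \<Longrightarrow> x - y \<in> S"
  unfolding subgrp_def by (metis diff_conv_add_uminus)
lemma subgrp_nmul: "subgrp S \<Longrightarrow> x \<in> S \<Longrightarrow> nmul n x \<in> S"
  unfolding subgrp_def by (induction n) auto
lemma subgrp_sum: "subgrp S \<Longrightarrow> (\<And>i. i \<in> A \<Longrightarrow> f i \<in> S) \<Longrightarrow> sum f A \<in> S"
  unfolding subgrp_def by (induction A rule: infinite_finite_induct) auto
lemma subgrp_add: "subgrp S \<Longrightarrow> x \<in> S \<Longrightarrow> y \<in> S \<Longrightarrow> x + y \<in> S"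
  unfolding subgrp_def by auto
lemma subgrp_neg: "subgrp S \<Longrightarrow> x \<in> S \<Longrightarrow> - x \<in> S"
  unfolding subgrp_def by auto
lemma subgrp_0: "subgrp S \<Longrightarrow> 0 \<in> S"
  unfolding subgrp_def by auto

lemma subgrp_range: assumes "additive_map f" shows "subgrp (range f)"
  unfolding subgrp_def
proof (intro conjI ballI)
  show "0 \<in> range f" using additive_0[OF assms] by (metis rangeI)
next
  fix x y assume "x \<in> range f" "y \<in> range f"
  then obtain a b where "x = f a" "y = f b" by blast
  then have "x + y = f (a + b)" using assms unfolding additive_map_def by simp
  then show "x + y \<in> range f" by simp
next
  fix x assume "x \<in> range f"
  then obtain a where "x = f a" by blast
  then have "- x = f (- a)" using additive_neg[OF assms] by simp
  then show "- x \<in> range f" by simp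
qed
lemma additive_nmul_map: "additive_map (nmul n :: 'a::ab_group_add \<Rightarrow> 'a)"
  by (simp add: additive_map_def nmul_add_right)
lemma subgrp_Int: "subgrp A \<Longrightarrow> subgrp B \<Longrightarrow> subgrp (A \<inter> B)"
  unfolding subgrp_def by auto
lemma subgrp_ker: "additive_map f \<Longrightarrow> subgrp {x. f x = 0}"
  unfolding subgrp_def using additive_0[of f] additive_neg[of f] unfolding additive_map_def by simp
lemma subgrp_kill: "subgrp {x::'a::ab_group_add. nmul n x = 0}"
  using subgrp_ker[OF additive_nmul_map] .
lemma subgrp_ppart: "subgrp (ppart p :: 'a::ab_group_add set)"
proof -
  have "nmul (p^(a+b)) (x+y) = 0" if "nmul (p^a) x = 0" "nmul (p^b) y = 0" for a b and x y :: 'a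
    using that by (simp add: nmul_add_right power_add nmul_mult) (metis mult.commute nmul_mult nmul_zero)
  then show ?thesis unfolding subgrp_def ppart_def
    by (auto simp: nmul_neg) (metis nmul_zero)
qed

lemma funpow_nmul: "(nmul m ^^ n) x = nmul (m^n) x"
  by (induction n arbitrary: x) (auto simp: nmul_mult)

lemma transition: "P (0::nat) \<Longrightarrow> \<not> P k \<Longrightarrow> \<exists>j<k. P j \<and> \<not> P (Suc j)"
  by (induction k) (auto simp: less_Suc_eq)

definition retract :: "('a::ab_group_add \<Rightarrow> 'a) \<Rightarrow> 'a set \<Rightarrow> bool" where
  "retract \<rho> A \<longleftrightarrow> additive_map \<rho> \<and> (\<forall>a\<in>A. \<rho> a = a) \<and> range \<rho> \<subseteq> A"

lemma descent:
  fixes S :: "'a::ab_group_add set"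
  shows "0 < n \<Longrightarrow> nmul n g \<in> S \<Longrightarrow> g \<notin> S \<Longrightarrow> \<exists>g' q. prime q \<and> g' \<notin> S \<and> nmul q g' \<in> S"
proof (induction n arbitrary: g rule: less_induct)
  case (less n)
  have "n \<noteq> 1" using less.prems(2,3) by (metis nmul_one)
  then obtain q where q: "prime q" "q dvd n" using prime_factor_nat by blast
  then obtain m where m: "n = q * m" by blast
  show ?case
  proof (cases "nmul m g \<in> S")
    case True
    have q1: "q > 1" using q prime_gt_1_nat by blast
    have "0 < m" using m less.prems(1) by (cases m) auto
    then have "m < n" using m q1 by simp
    then show ?thesis using less.IH \<open>0 < m\<close> True less.prems(3) by blast
  next
    case False
    moreover have "nmul q (nmul m g) \<in> S" using m less.prems(2) by (simp add: nmul_mult)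
    ultimately show ?thesis using q(1) by blast
  qed
qed

lemma summand:
  fixes A :: "'a::ab_group_add set" and p e :: nat
  assumes A: "subgrp A" and p: "prime p" and e: "e > 0"
    and kill: "\<And>a. a \<in> A \<Longrightarrow> nmul (p^e) a = 0"
    and pure0: "\<And>a g. a \<in> A \<Longrightarrow> a = nmul (p^e) g \<Longrightarrow> a = 0"
    and pure1: "\<And>a. a \<in> A \<Longrightarrow> nmul (p^(e-1)) a = 0 \<Longrightarrow> \<exists>a'\<in>A. a = nmul p a'"
  shows "\<exists>\<rho>. retract \<rho> A"
proof -
  define PG where "PG = range (nmul (p^e) :: 'a \<Rightarrow> 'a)"
  define CC where "CC = {C. subgrp C \<and> PG \<subseteq> C \<and> C \<inter> A = {0}}"
  have PG: "subgrp PG" unfolding PG_def by (rule subgrp_range[OF additive_nmul_map])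
  have A0: "0 \<in> A" using A by (rule subgrp_0)
  have PGA: "PG \<inter> A = {0}"
  proof
    show "PG \<inter> A \<subseteq> {0}" using pure0 unfolding PG_def by blast
    show "{0} \<subseteq> PG \<inter> A" using A0 subgrp_0[OF PG] by blast
  qed
  have "\<exists>M\<in>CC. \<forall>X\<in>CC. M \<subseteq> X \<longrightarrow> X = M"
  proof (rule Zorn_Lemma2, intro ballI)
    fix Ch assume Ch: "Ch \<in> chains CC"
    show "\<exists>U\<in>CC. \<forall>X\<in>Ch. X \<subseteq> U"
    proof (cases "Ch = {}")
      case True then show ?thesis using PG PGA unfolding CC_def by auto
    next
      case False
      have sub: "Ch \<subseteq> CC" and ch: "\<And>X Y. X \<in> Ch \<Longrightarrow> Y \<in> Ch \<Longrightarrow> X \<subseteq> Y \<or> Y \<subseteq> X"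
        using Ch unfolding chains_def chain_subset_def by auto
      have "\<Union>Ch \<in> CC"
      proof -
        have "subgrp (\<Union>Ch)" unfolding subgrp_def
        proof (intro conjI ballI)
          show "0 \<in> \<Union>Ch" using False sub unfolding CC_def subgrp_def by blast
        next
          fix x y assume "x \<in> \<Union>Ch" "y \<in> \<Union>Ch"
          then obtain X Y where XY: "x \<in> X" "y \<in> Y" "X \<in> Ch" "Y \<in> Ch" by blast
          then have "X \<subseteq> Y \<or> Y \<subseteq> X" using ch by blast
          then show "x + y \<in> \<Union>Ch"
          proof
            assume "X \<subseteq> Y" then show ?thesis using XY sub unfolding CC_def subgrp_def by blast
          next
            assume "Y \<subseteq> X" then show ?thesis using XY sub unfolding CC_def subgrp_def by blast
          qed
        next
          fix x assume "x \<in> \<Union>Ch" then show "-x \<in> \<Union>Ch" using sub unfolding CC_def subgrp_def by blast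
        qed
        moreover have "PG \<subseteq> \<Union>Ch" using False sub unfolding CC_def by blast
        moreover have "\<Union>Ch \<inter> A = {0}"
        proof
          show "\<Union>Ch \<inter> A \<subseteq> {0}" using sub unfolding CC_def by blast
          show "{0} \<subseteq> \<Union>Ch \<inter> A" using A0 False sub unfolding CC_def subgrp_def by blast
        qed
        ultimately show ?thesis unfolding CC_def by blast
      qed
      then show ?thesis by blast
    qed
  qed
  then obtain C where C: "C \<in> CC" and max: "\<And>X. X \<in> CC \<Longrightarrow> C \<subseteq> X \<Longrightarrow> X = C" by blast
  have Cs: "subgrp C" and PGC: "PG \<subseteq> C" and CA: "C \<inter> A = {0}" using C unfolding CC_def by auto
  have CA': "\<And>x. x \<in> C \<Longrightarrow> x \<in> A \<Longrightarrow> x = 0" using CA by blast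
  define S where "S = {a + c | a c. a \<in> A \<and> c \<in> C}"
  have inS: "a \<in> A \<Longrightarrow> c \<in> C \<Longrightarrow> a + c \<in> S" for a c unfolding S_def by blast
  have SS: "subgrp S" unfolding subgrp_def
  proof (intro conjI ballI)
    show "0 \<in> S" using inS[OF A0 subgrp_0[OF Cs]] by simp
  next
    fix x y assume "x \<in> S" "y \<in> S"
    then obtain a c a' c' where "a \<in> A" "c \<in> C" "a' \<in> A" "c' \<in> C" "x = a + c" "y = a' + c'"
      unfolding S_def by blast
    then show "x + y \<in> S" using inS[of "a + a'" "c + c'"] subgrp_add[OF A] subgrp_add[OF Cs]
      by (simp add: algebra_simps)
  next
    fix x assume "x \<in> S"
    then obtain a c where "a \<in> A" "c \<in> C" "x = a + c" unfolding S_def by blast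
    then show "- x \<in> S" using inS[of "-a" "-c"] subgrp_neg[OF A] subgrp_neg[OF Cs] by simp
  qed
  have AS: "a \<in> A \<Longrightarrow> a \<in> S" for a using inS[of a 0] subgrp_0[OF Cs] by simp
  have CS: "c \<in> C \<Longrightarrow> c \<in> S" for c using inS[of 0 c] A0 by simp
  have ext: "\<exists>d>0. \<exists>a0\<in>A. a0 \<noteq> 0 \<and> (\<exists>c\<in>C. nmul d g = a0 + c)" if g: "g \<notin> S" for g
  proof -
    define C' where "C' = {c + nmul a1 g - nmul b1 g | c a1 b1. c \<in> C}"
    have C'C: "c \<in> C'" if "c \<in> C" for c
    proof -
      have "c = c + nmul 0 g - nmul 0 g" by simp
      then show ?thesis unfolding C'_def using that by blast
    qed
    have gC': "g \<in> C'"
    proof -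
      have "g = 0 + nmul 1 g - nmul 0 g" by simp
      then show ?thesis unfolding C'_def using subgrp_0[OF Cs] by blast
    qed
    have C's: "subgrp C'" unfolding subgrp_def
    proof (intro conjI ballI)
      show "0 \<in> C'" using C'C subgrp_0[OF Cs] by blast
    next
      fix x y assume "x \<in> C'" "y \<in> C'"
      then obtain c a1 b1 c' a1' b1' where cc: "c \<in> C" "c' \<in> C" and xe: "x = c + nmul a1 g - nmul b1 g"
         and ye: "y = c' + nmul a1' g - nmul b1' g" unfolding C'_def by blast
      have "x + y = (c + c') + nmul (a1 + a1') g - nmul (b1 + b1') g"
        unfolding xe ye nmul_add_left by (simp add: algebra_simps)
      moreover have "c + c' \<in> C" using subgrp_add[OF Cs cc] .
      ultimately show "x + y \<in> C'" unfolding C'_def by blast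
    next
      fix x assume "x \<in> C'"
      then obtain c a1 b1 where cc: "c \<in> C" and xe: "x = c + nmul a1 g - nmul b1 g" unfolding C'_def by blast
      have "- x = (-c) + nmul b1 g - nmul a1 g" unfolding xe by (simp add: algebra_simps)
      moreover have "-c \<in> C" using subgrp_neg[OF Cs cc] .
      ultimately show "- x \<in> C'" unfolding C'_def by blast
    qed
    have "C' \<noteq> C" using gC' g CS by blast
    then have "C' \<notin> CC" using max C'C by blast
    then have "C' \<inter> A \<noteq> {0}" using C's PGC C'C unfolding CC_def by blast
    moreover have "0 \<in> C' \<inter> A" using A0 subgrp_0[OF C's] by blast
    ultimately obtain a0 where a0: "a0 \<in> C'" "a0 \<in> A" "a0 \<noteq> 0" by blast
    then obtain c a1 b1 where c: "c \<in> C" "a0 = c + nmul a1 g - nmul b1 g" unfolding C'_def by blast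
    consider "a1 = b1" | "b1 < a1" | "a1 < b1" by linarith
    then show ?thesis
    proof cases
      case 1 then have "a0 = c" using c by simp
      then show ?thesis using CA' a0 c by blast
    next
      case 2
      have "nmul (a1 - b1) g = nmul a1 g - nmul b1 g" using 2 by (simp add: nmul_sub)
      also have "\<dots> = a0 + (- c)" using c by (simp add: algebra_simps)
      finally have eq: "nmul (a1 - b1) g = a0 + (- c)" .
      have "a1 - b1 > 0" using 2 by simp
      then show ?thesis using eq a0(2,3) subgrp_neg[OF Cs c(1)] by blast
    next
      case 3
      have "nmul (b1 - a1) g = nmul b1 g - nmul a1 g" using 3 by (simp add: nmul_sub)
      also have "\<dots> = (- a0) + c" using c by (simp add: algebra_simps)
      finally have eq: "nmul (b1 - a1) g = (- a0) + c" .
      have "b1 - a1 > 0" using 3 by simp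
      moreover have "- a0 \<noteq> 0" using a0(3) by simp
      ultimately show ?thesis using eq c(1) subgrp_neg[OF A a0(2)] by blast
    qed
  qed
  have L: False if g: "g \<notin> S" and q: "prime q" and qg: "nmul q g \<in> C" for g q
  proof -
    obtain d a0 c where d: "d > 0" "a0 \<in> A" "a0 \<noteq> 0" "c \<in> C" "nmul d g = a0 + c"
      using ext[OF g] by blast
    show False
    proof (cases "q dvd d")
      case True
      then obtain k where "d = k * q" by (metis dvdE mult.commute)
      then have "nmul d g \<in> C" using subgrp_nmul[OF Cs qg] by (simp add: nmul_mult)
      then have "a0 \<in> C" using subgrp_diff[OF Cs _ d(4)] d(5) by force
      then show False using CA' d by blast
    next
      case False
      then have "coprime d q" using prime_imp_coprime[OF q] by (simp add: coprime_commute)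
      then have "gcd d q = 1" by simp
      then obtain x y where xy: "d * x = q * y + 1" using bezout_nat[of d q] d(1) by auto
      have "nmul (d*x) g = nmul (q*y) g + g" using xy by (simp add: nmul_add_left)
      then have "g = nmul (x*d) g - nmul (y*q) g" by (simp add: mult.commute)
      also have "\<dots> = nmul x a0 + (nmul x c - nmul y (nmul q g))" using d(5)
        by (simp add: nmul_mult nmul_add_right)
      finally have eq: "g = nmul x a0 + (nmul x c - nmul y (nmul q g))" .
      have "g \<in> S"
        by (subst eq) (rule inS[OF subgrp_nmul[OF A d(2)] subgrp_diff[OF Cs subgrp_nmul[OF Cs d(4)] subgrp_nmul[OF Cs qg]]])
      then show False using g by blast
    qed
  qed
  have all: "g \<in> S" for g
  proof (rule ccontr)
    assume g: "g \<notin> S"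
    obtain d a0 c where d: "d > 0" "a0 \<in> A" "c \<in> C" "nmul d g = a0 + c"
      using ext[OF g] by blast
    then have "nmul d g \<in> S" using inS by simp
    then obtain g' q where q: "prime q" "g' \<notin> S" "nmul q g' \<in> S" using descent d(1) g by blast
    then obtain a c where ac: "a \<in> A" "c \<in> C" "nmul q g' = a + c" unfolding S_def by blast
    have "\<exists>g''. g'' \<notin> S \<and> nmul q g'' \<in> C"
    proof (cases "q = p")
      case True
      have "nmul (p^(e-1)) (a + c) = nmul (p^(e-1) * p) g'" using ac True by (simp add: nmul_mult)
      also have "p^(e-1) * p = p^e" using e by (metis Suc_diff_1 power_Suc2)
      finally have "nmul (p^(e-1)) a + nmul (p^(e-1)) c \<in> C" using PGC unfolding PG_def
        by (auto simp: nmul_add_right)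
      then have "nmul (p^(e-1)) a \<in> C"
        using subgrp_diff[OF Cs _ subgrp_nmul[OF Cs ac(2)], of "nmul (p^(e-1)) a + nmul (p^(e-1)) c" "p^(e-1)"]
        by simp
      then have "nmul (p^(e-1)) a = 0" using CA' subgrp_nmul[OF A ac(1)] by blast
      then obtain a' where a': "a' \<in> A" "a = nmul p a'" using pure1 ac(1) by blast
      have "nmul q (g' - a') = c" using ac a' True by (simp add: nmul_diff)
      moreover have "g' - a' \<notin> S"
      proof
        assume "g' - a' \<in> S"
        then have "(g' - a') + a' \<in> S" using subgrp_add[OF SS _ AS[OF a'(1)]] by blast
        then show False using q by simp
      qed
      ultimately show ?thesis using ac(2) by blast
    next
      case False
      have "coprime q p" using primes_coprime[OF q(1) p False] .
      then have "coprime q (p^e)" by simp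
      then obtain v where v: "nmul (q*v) a = a" using nmul_inv[OF kill[OF ac(1)]] by blast
      have "nmul q (g' - nmul v a) = c" using ac v by (simp add: nmul_diff nmul_mult)
      moreover have "g' - nmul v a \<notin> S"
      proof
        assume "g' - nmul v a \<in> S"
        then have "(g' - nmul v a) + nmul v a \<in> S" using subgrp_add[OF SS _ AS[OF subgrp_nmul[OF A ac(1)]]] by blast
        then show False using q by simp
      qed
      ultimately show ?thesis using ac(2) by blast
    qed
    then show False using L q(1) by blast
  qed
  define \<rho> where "\<rho> g = (SOME a. a \<in> A \<and> g - a \<in> C)" for g
  have char: "\<rho> g = a" if "a \<in> A" "g - a \<in> C" for g a
  proof -
    have ex: "\<rho> g \<in> A \<and> g - \<rho> g \<in> C" unfolding \<rho>_def by (rule someI[of _ a]) (use that in blast)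
    have "a - \<rho> g = (g - \<rho> g) - (g - a)" by simp
    then have "a - \<rho> g \<in> C" using subgrp_diff[OF Cs] ex that by metis
    moreover have "a - \<rho> g \<in> A" using subgrp_diff[OF A] ex that by metis
    ultimately show ?thesis using CA' by fastforce
  qed
  have dec: "\<rho> g \<in> A \<and> g - \<rho> g \<in> C" for g
  proof -
    obtain a c where "a \<in> A" "c \<in> C" "g = a + c" using all[of g] unfolding S_def by blast
    then show ?thesis using char[of a g] by simp
  qed
  have "retract \<rho> A" unfolding retract_def additive_map_def
  proof (intro conjI allI ballI)
    fix x y
    have "(x + y) - (\<rho> x + \<rho> y) = (x - \<rho> x) + (y - \<rho> y)" by simp
    then have "(x + y) - (\<rho> x + \<rho> y) \<in> C" using subgrp_add[OF Cs] dec by metis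
    then show "\<rho> (x + y) = \<rho> x + \<rho> y" using char subgrp_add[OF A] dec by blast
  next
    fix a assume "a \<in> A" then show "\<rho> a = a" using char subgrp_0[OF Cs] by simp
  next
    show "range \<rho> \<subseteq> A" using dec by blast
  qed
  then show ?thesis by blast
qed

lemma finite_retract:
  fixes p :: nat
  assumes p: "prime p"
  shows "finite B \<Longrightarrow> subgrp B \<Longrightarrow> (\<forall>b\<in>B. \<exists>k. nmul (p^k) b = 0) \<Longrightarrow>
    (\<forall>b\<in>B. \<forall>r g. b = nmul (p^r) g \<longrightarrow> (\<exists>b'\<in>B. b = nmul (p^r) b')) \<Longrightarrow>
    \<exists>\<rho>. retract \<rho> (B::'a::ab_group_add set)"
proof (induction "card B" arbitrary: B rule: less_induct)
  case less
  note fin = less.prems(1) and sg = less.prems(2) and tor = less.prems(3) and pure = less.prems(4)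
  have B0: "0 \<in> B" using subgrp_0[OF sg] .
  show ?case
  proof (cases "B = {0}")
    case True
    have "retract (\<lambda>_. 0) B" unfolding retract_def additive_map_def using True by auto
    then show ?thesis by blast
  next
    case False
    have ex: "\<exists>M. \<forall>b\<in>B. nmul (p^M) b = 0"
    proof -
      obtain kf where kf: "\<And>b. b \<in> B \<Longrightarrow> nmul (p^(kf b)) b = 0" using tor by metis
      define M where "M = Max (kf ` B)"
      have "nmul (p^M) b = 0" if b: "b \<in> B" for b
      proof -
        have "kf b \<le> M" unfolding M_def using fin b by simp
        then have "p^(kf b) dvd p^M" by (rule le_imp_power_dvd)
        then show ?thesis using nmul_kill_dvd kf[OF b] by blast
      qed
      then show ?thesis by blast
    qed
    define m where "m = (LEAST M. \<forall>b\<in>B. nmul (p^M) b = 0)"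
    have mk: "\<forall>b\<in>B. nmul (p^m) b = 0" unfolding m_def by (rule LeastI_ex[OF ex])
    have m0: "m \<noteq> 0"
    proof
      assume "m = 0"
      then have "\<forall>b\<in>B. b = 0" using mk by simp
      then show False using False B0 by blast
    qed
    have "\<not> (\<forall>b\<in>B. nmul (p^(m-1)) b = 0)"
    proof
      assume "\<forall>b\<in>B. nmul (p^(m-1)) b = 0"
      then have "m \<le> m - 1" unfolding m_def by (rule Least_le)
      then show False using m0 by simp
    qed
    then obtain x where x: "x \<in> B" "nmul (p^(m-1)) x \<noteq> 0" by blast
    define A where "A = range (\<lambda>n. nmul n x)"
    have AB: "A \<subseteq> B" using subgrp_nmul[OF sg x(1)] unfolding A_def by auto
    have xA: "x \<in> A" unfolding A_def by (metis nmul_one rangeI)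
    have Asg: "subgrp A" unfolding subgrp_def
    proof (intro conjI ballI)
      show "0 \<in> A" unfolding A_def by (metis nmul.simps(1) rangeI)
    next
      fix a b assume "a \<in> A" "b \<in> A"
      then obtain i j where "a = nmul i x" "b = nmul j x" unfolding A_def by blast
      then have "a + b = nmul (i + j) x" by (simp add: nmul_add_left)
      then show "a + b \<in> A" unfolding A_def by simp
    next
      fix a assume "a \<in> A"
      then obtain i where ai: "a = nmul i x" unfolding A_def by blast
      have pm: "p^m \<ge> 1" using prime_gt_0_nat[OF p] by (simp add: Suc_le_eq)
      have "nmul ((p^m - 1) * i) x + a = nmul ((p^m - 1) * i + i) x" using ai by (simp add: nmul_add_left)
      also have "(p^m - 1) * i + i = i * p^m" using pm by (simp add: algebra_simps)
      also have "nmul (i * p^m) x = 0" using mk x(1) by (simp add: nmul_mult)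
      finally have "- a = nmul ((p^m - 1) * i) x" by (metis add.commute minus_unique)
      then show "- a \<in> A" unfolding A_def by simp
    qed
    have "\<exists>\<sigma>. retract \<sigma> A"
    proof (rule summand[OF Asg p])
      show "0 < m" using m0 by simp
    next
      fix a assume "a \<in> A" then show "nmul (p^m) a = 0" using AB mk by blast
    next
      fix a g assume a: "a \<in> A" "a = nmul (p^m) g"
      then obtain b' where "b' \<in> B" "a = nmul (p^m) b'" using pure AB by blast
      then show "a = 0" using mk by simp
    next
      fix a assume a: "a \<in> A" "nmul (p^(m-1)) a = 0"
      then obtain n where an: "a = nmul n x" unfolding A_def by blast
      show "\<exists>a'\<in>A. a = nmul p a'"
      proof (cases "p dvd n")
        case True
        then obtain k where "n = p * k" by blast
        then have "a = nmul p (nmul k x)" using an by (simp add: nmul_mult)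
        then show ?thesis unfolding A_def by blast
      next
        case False
        then have "coprime p n" using prime_imp_coprime[OF p] by blast
        then have cop: "coprime n (p^m)" by (simp add: coprime_commute)
        define y where "y = nmul (p^(m-1)) x"
        have "y \<in> B" unfolding y_def using subgrp_nmul[OF sg x(1)] .
        then have "nmul (p^m) y = 0" using mk by blast
        then obtain v where v: "nmul (n*v) y = y" using nmul_inv[OF _ cop] by blast
        have "nmul n y = nmul (n * p^(m-1)) x" unfolding y_def by (simp add: nmul_mult)
        also have "\<dots> = nmul (p^(m-1)) a" unfolding an nmul_mult[symmetric] by (simp add: mult.commute)
        finally have "nmul n y = 0" using a(2) by simp
        then have "y = 0" using v by (metis mult.commute nmul_mult nmul_zero)
        then show ?thesis using x(2) unfolding y_def by simp
      qed
    qed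
    then obtain \<sigma> where \<sigma>: "retract \<sigma> A" by blast
    have \<sigma>add: "additive_map \<sigma>" and \<sigma>id: "\<And>a. a \<in> A \<Longrightarrow> \<sigma> a = a" and \<sigma>r: "\<And>g. \<sigma> g \<in> A"
      using \<sigma> unfolding retract_def by auto
    define B' where "B' = B \<inter> {b. \<sigma> b = 0}"
    have x0: "x \<noteq> 0" using x(2) by auto
    have "x \<notin> B'" unfolding B'_def using \<sigma>id[OF xA] x0 by simp
    then have "B' \<subset> B" using x(1) unfolding B'_def by blast
    then have cardlt: "card B' < card B" using fin psubset_card_mono by blast
    have finB': "finite B'" using fin unfolding B'_def by simp
    have sgB': "subgrp B'" unfolding B'_def by (rule subgrp_Int[OF sg subgrp_ker[OF \<sigma>add]])
    have torB': "\<forall>b\<in>B'. \<exists>k. nmul (p^k) b = 0" using tor unfolding B'_def by blast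
    have pureB': "\<forall>b\<in>B'. \<forall>r g. b = nmul (p^r) g \<longrightarrow> (\<exists>b'\<in>B'. b = nmul (p^r) b')"
    proof (intro ballI allI impI)
      fix b r g assume b: "b \<in> B'" "b = nmul (p^r) g"
      then obtain b0 where b0: "b0 \<in> B" "b = nmul (p^r) b0" using pure unfolding B'_def by blast
      define b1 where "b1 = b0 - \<sigma> b0"
      have "b1 \<in> B" unfolding b1_def using subgrp_diff[OF sg b0(1)] AB \<sigma>r by blast
      moreover have "\<sigma> b1 = 0" unfolding b1_def using additive_diff[OF \<sigma>add] \<sigma>id[OF \<sigma>r] by simp
      moreover have "nmul (p^r) b1 = b"
      proof -
        have "nmul (p^r) b1 = b - \<sigma> (nmul (p^r) b0)" unfolding b1_def using b0(2)
          by (simp add: nmul_diff additive_nmul[OF \<sigma>add])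
        also have "\<dots> = b" using b(1) b0(2) unfolding B'_def by simp
        finally show ?thesis .
      qed
      ultimately show "\<exists>b'\<in>B'. b = nmul (p^r) b'" unfolding B'_def by blast
    qed
    obtain \<rho>' where \<rho>': "retract \<rho>' B'" using less.hyps[OF cardlt finB' sgB' torB' pureB'] by blast
    have \<rho>'add: "additive_map \<rho>'" and \<rho>'id: "\<And>a. a \<in> B' \<Longrightarrow> \<rho>' a = a" and \<rho>'r: "\<And>g. \<rho>' g \<in> B'"
      using \<rho>' unfolding retract_def by auto
    define \<rho> where "\<rho> g = \<sigma> g + \<rho>' (g - \<sigma> g)" for g
    have "retract \<rho> B" unfolding retract_def
    proof (intro conjI ballI)
      show "additive_map \<rho>" unfolding additive_map_def
      proof (intro allI)
        fix a b
        have e1: "\<sigma> (a + b) = \<sigma> a + \<sigma> b" using \<sigma>add unfolding additive_map_def by blast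
        have e2: "a + b - \<sigma> (a + b) = (a - \<sigma> a) + (b - \<sigma> b)" unfolding e1 by simp
        have e3: "\<rho>' ((a - \<sigma> a) + (b - \<sigma> b)) = \<rho>' (a - \<sigma> a) + \<rho>' (b - \<sigma> b)"
          using \<rho>'add unfolding additive_map_def by blast
        show "\<rho> (a + b) = \<rho> a + \<rho> b" by (simp only: \<rho>_def e2 e3) (simp add: e1 algebra_simps)
      qed
    next
      fix b assume b: "b \<in> B"
      have "b - \<sigma> b \<in> B'" unfolding B'_def
        using subgrp_diff[OF sg b] AB \<sigma>r additive_diff[OF \<sigma>add] \<sigma>id[OF \<sigma>r] by auto
      then show "\<rho> b = b" unfolding \<rho>_def using \<rho>'id by simp
    next
      show "range \<rho> \<subseteq> B" unfolding \<rho>_def using subgrp_add[OF sg] AB \<sigma>r \<rho>'r B'_def by blast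
    qed
    then show ?thesis by blast
  qed
qed

lemma nmul_neg_mult: assumes "nmul Q z = 0" "Q \<ge> 1"
  shows "nmul ((Q-1)*m) z = - nmul m z"
proof -
  have "nmul ((Q-1)*m) z + nmul m z = nmul ((Q-1)*m + m) z" by (simp add: nmul_add_left)
  also have "(Q-1)*m + m = m * Q" using assms(2) by (simp add: algebra_simps)
  also have "nmul (m * Q) z = 0" using assms(1) by (simp add: nmul_mult)
  finally show ?thesis by (metis add.commute minus_unique)
qed

lemma pow_nmul_Suc': "nmul (p * p^i) x = nmul (p^i) (nmul p x)"
proof -
  have "nmul (p * p^i) x = nmul (p^i * p) x" by (simp only: mult.commute)
  then show ?thesis by (simp only: nmul_mult)
qed
lemma pow_nmul_Suc: "nmul (p^Suc i) x = nmul (p^i) (nmul p x)"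
  unfolding power_Suc by (rule pow_nmul_Suc')

lemma sch_div:
  assumes sch: "strongly_co_Hopfian TYPE('a::ab_group_add)" and n: "n > 0"
  shows "\<exists>y::'a. nmul n y - g \<in> torsion_part"
proof -
  obtain k where k: "range (nmul n ^^ k) = range ((nmul n :: 'a \<Rightarrow> 'a) ^^ Suc k)"
    using sch additive_nmul_map unfolding strongly_co_Hopfian_def by blast
  have fk: "(nmul n ^^ i) = (nmul (n^i) :: 'a \<Rightarrow> 'a)" for i by (rule ext) (rule funpow_nmul)
  have "nmul (n^k) g \<in> range (nmul (n^k) :: 'a \<Rightarrow> 'a)" by simp
  then have "nmul (n^k) g \<in> range (nmul (n^Suc k) :: 'a \<Rightarrow> 'a)" using k unfolding fk by simp
  then obtain y :: 'a where y: "nmul (n^k) g = nmul (n^Suc k) y" by blast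
  also have "\<dots> = nmul (n^k) (nmul n y)" by (rule pow_nmul_Suc)
  finally have "nmul (n^k) (nmul n y - g) = 0" by (simp add: nmul_diff)
  moreover have "n^k > 0" using n by simp
  ultimately show ?thesis unfolding torsion_part_def by blast
qed

lemma sch_bound:
  assumes sch: "strongly_co_Hopfian TYPE('a::ab_group_add)" and red: "reduced_grp TYPE('a)"
    and p: "prime p"
  shows "\<exists>k. (\<forall>t\<in>(ppart p :: 'a set). nmul (p^k) t = 0) \<and> ppart p \<inter> range (nmul (p^k) :: 'a \<Rightarrow> 'a) = {0}"
proof -
  have p1: "p > 1" using p prime_gt_1_nat by blast
  obtain k where k: "range (nmul p ^^ k) = range ((nmul p :: 'a \<Rightarrow> 'a) ^^ Suc k)"
    using sch additive_nmul_map unfolding strongly_co_Hopfian_def by blast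
  have fk: "(nmul p ^^ i) = (nmul (p^i) :: 'a \<Rightarrow> 'a)" for i by (rule ext) (rule funpow_nmul)
  have k': "range (nmul (p^k) :: 'a \<Rightarrow> 'a) = range (nmul (p^Suc k))" using k unfolding fk .
  define D where "D = ppart p \<inter> range (nmul (p^k) :: 'a \<Rightarrow> 'a)"
  have Dsg: "subgrp D" unfolding D_def by (rule subgrp_Int[OF subgrp_ppart subgrp_range[OF additive_nmul_map]])
  have pdiv: "\<exists>y\<in>D. nmul p y = x" if x: "x \<in> D" for x
  proof -
    have "x \<in> range (nmul (p^Suc k) :: 'a \<Rightarrow> 'a)" using x k' unfolding D_def by blast
    then obtain z where z: "x = nmul (p^Suc k) z" by blast
    define y where "y = nmul (p^k) z"
    have xy: "nmul p y = x" unfolding y_def z by (simp add: nmul_mult[symmetric])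
    obtain a where a: "nmul (p^a) x = 0" using x unfolding D_def ppart_def by blast
    have "nmul (p^Suc a) y = 0" using a xy by (simp only: pow_nmul_Suc)
    then have "y \<in> ppart p" unfolding ppart_def by blast
    then have "y \<in> D" unfolding D_def y_def by blast
    then show ?thesis using xy by blast
  qed
  have div: "\<forall>x\<in>D. \<exists>y\<in>D. nmul n y = x" if "n > 0" for n
    using that
  proof (induction n rule: less_induct)
    case (less n)
    show ?case
    proof
      fix x assume x: "x \<in> D"
      show "\<exists>y\<in>D. nmul n y = x"
      proof (cases "p dvd n")
        case True
        then obtain n' where n': "n = p * n'" by blast
        then have "n' > 0" "n' < n" using less.prems p1 by auto
        obtain y1 where y1: "y1 \<in> D" "nmul p y1 = x" using pdiv[OF x] by blast
        obtain y where y: "y \<in> D" "nmul n' y = y1" using less.IH[OF \<open>n' < n\<close> \<open>n' > 0\<close>] y1(1) by blast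
        have "nmul n y = x" unfolding n' nmul_mult y(2) y1(2) ..
        then show ?thesis using y(1) by blast
      next
        case False
        then have "coprime p n" using prime_imp_coprime[OF p] by blast
        obtain a where a: "nmul (p^a) x = 0" using x unfolding D_def ppart_def by blast
        have "coprime n (p^a)" using \<open>coprime p n\<close> by (simp add: coprime_commute)
        then obtain v where v: "nmul (n*v) x = x" using nmul_inv[OF a] by blast
        have "nmul v x \<in> D" using subgrp_nmul[OF Dsg x] .
        moreover have "nmul n (nmul v x) = x" using v by (simp add: nmul_mult)
        ultimately show ?thesis by blast
      qed
    qed
  qed
  have "divisible_subgrp D" unfolding divisible_subgrp_def using Dsg div by blast
  then have D0: "D = {0}" using red unfolding reduced_grp_def by blast
  have "\<forall>t\<in>(ppart p :: 'a set). nmul (p^k) t = 0"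
  proof
    fix t :: 'a assume "t \<in> ppart p"
    then have "nmul (p^k) t \<in> D" unfolding D_def using subgrp_nmul[OF subgrp_ppart] by blast
    then show "nmul (p^k) t = 0" using D0 by blast
  qed
  then show ?thesis using D0 unfolding D_def by blast
qed

lemma fin_from_socle:
  fixes p :: nat
  assumes p: "prime p" and bnd: "\<forall>t\<in>(ppart p :: 'a::ab_group_add set). nmul (p^k) t = 0"
    and S: "finite {x::'a. nmul p x = 0}"
  shows "finite (ppart p :: 'a set)"
proof -
  have "finite {x::'a. nmul (p^i) x = 0}" for i
  proof (induction i)
    case 0 then show ?case by simp
  next
    case (Suc i)
    let ?T = "{x::'a. nmul (p^i) x = 0}"
    have fib: "finite {x::'a. nmul p x = y}" for y
    proof (cases "\<exists>x0. nmul p x0 = y")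
      case True
      then obtain x0 where x0: "nmul p x0 = y" by blast
      have "{x. nmul p x = y} \<subseteq> (\<lambda>s. x0 + s) ` {x. nmul p x = 0}"
      proof
        fix x assume "x \<in> {x. nmul p x = y}"
        then have "nmul p (x - x0) = 0" using x0 by (simp add: nmul_diff)
        moreover have "x = x0 + (x - x0)" by simp
        ultimately show "x \<in> (\<lambda>s. x0 + s) ` {x. nmul p x = 0}" by blast
      qed
      then show ?thesis using S finite_subset by blast
    next
      case False then show ?thesis by simp
    qed
    have "{x::'a. nmul (p^Suc i) x = 0} \<subseteq> (\<Union>y\<in>?T. {x. nmul p x = y})"
      by (auto simp: pow_nmul_Suc')
    moreover have "finite (\<Union>y\<in>?T. {x. nmul p x = y})" using Suc fib by blast
    ultimately show ?case using finite_subset by blast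
  qed
  moreover have "ppart p \<subseteq> {x::'a. nmul (p^k) x = 0}" using bnd by blast
  ultimately show ?thesis using finite_subset by blast
qed

primrec Wseq :: "'a::ab_group_add set \<Rightarrow> ('a set \<Rightarrow> 'a) \<Rightarrow> nat \<Rightarrow> 'a set" where
  "Wseq W0 sel 0 = W0"
| "Wseq W0 sel (Suc n) = {w + nmul c (sel (Wseq W0 sel n)) | w c. w \<in> Wseq W0 sel n}"

lemma Tp_finite:
  assumes sch: "strongly_co_Hopfian TYPE('a::ab_group_add)" and red: "reduced_grp TYPE('a)"
    and p: "prime p"
  shows "finite (ppart p :: 'a set)"
proof (rule ccontr)
  assume inf: "infinite (ppart p :: 'a set)"
  have p1: "p > 1" using p prime_gt_1_nat by blast
  obtain k where bnd: "\<forall>t\<in>(ppart p :: 'a set). nmul (p^k) t = 0"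
    and inter: "ppart p \<inter> range (nmul (p^k) :: 'a \<Rightarrow> 'a) = {0}"
    using sch_bound[OF sch red p] by blast
  define S where "S = {x::'a. nmul p x = 0}"
  have Sinf: "infinite S" using fin_from_socle[OF p bnd] inf unfolding S_def by blast
  have SP: "S \<subseteq> ppart p" unfolding S_def ppart_def by (auto intro!: exI[of _ 1])
  define Si where "Si i = S \<inter> range (nmul (p^i) :: 'a \<Rightarrow> 'a)" for i
  have Ssg: "subgrp S" unfolding S_def by (rule subgrp_kill)
  have Sisg: "subgrp (Si i)" for i unfolding Si_def by (rule subgrp_Int[OF Ssg subgrp_range[OF additive_nmul_map]])
  have "range (nmul (p^0) :: 'a \<Rightarrow> 'a) = UNIV"
  proof -
    have "y \<in> range (nmul (p^0) :: 'a \<Rightarrow> 'a)" for y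
    proof -
      have "y = nmul (p^0) y" by simp
      then show ?thesis by blast
    qed
    then show ?thesis by blast
  qed
  then have Si0: "Si 0 = S" unfolding Si_def by simp
  have "Si k \<subseteq> {0}" using SP inter unfolding Si_def by blast
  then have Sik: "finite (Si k)" using finite_subset by blast
  obtain j where j: "j < k" "infinite (Si j)" "\<not> infinite (Si (Suc j))"
    using transition[of "\<lambda>i. infinite (Si i)" k] Sinf Si0 Sik by auto
  define PJ where "PJ = range (nmul (p^Suc j) :: 'a \<Rightarrow> 'a)"
  have PJsg: "subgrp PJ" unfolding PJ_def by (rule subgrp_range[OF additive_nmul_map])
  have finJ: "finite (Si (Suc j))" using j(3) by simp
  have SiJ: "Si (Suc j) = S \<inter> PJ" by (simp add: Si_def PJ_def)
  define sel where "sel W = (SOME s. s \<in> Si j \<and> s \<notin> W)" for W :: "'a set"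
  define W where "W = Wseq (Si (Suc j)) sel"
  define s where "s n = sel (W n)" for n
  have W0: "W 0 = Si (Suc j)" unfolding W_def by simp
  have WSuc: "W (Suc n) = {w + nmul c (s n) | w c. w \<in> W n}" for n unfolding W_def s_def by simp
  have spec: "s n \<in> Si j \<and> s n \<notin> W n" if "finite (W n)" for n
  proof -
    have "infinite (Si j - W n)" using Diff_infinite_finite[OF that j(2)] .
    then have "Si j - W n \<noteq> {}" by (metis finite.emptyI)
    then obtain s0 where "s0 \<in> Si j \<and> s0 \<notin> W n" by blast
    then show ?thesis unfolding s_def sel_def by (rule someI)
  qed
  have finW: "finite (W n)" for n
  proof (induction n)
    case 0 then show ?case using finJ W0 by simp
  next
    case (Suc n)
    have sS: "nmul p (s n) = 0" using spec[OF Suc] unfolding Si_def S_def by blast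
    have "W (Suc n) \<subseteq> (\<lambda>(w,c). w + nmul c (s n)) ` (W n \<times> {..<p})"
    proof
      fix z assume "z \<in> W (Suc n)"
      then obtain w c where wc: "w \<in> W n" "z = w + nmul c (s n)" unfolding WSuc by blast
      have "nmul c (s n) = nmul (c mod p) (s n)" using nmul_mod[OF sS] .
      moreover have "c mod p < p" using p1 by simp
      ultimately have "(w, c mod p) \<in> W n \<times> {..<p}" "z = (\<lambda>(w,c). w + nmul c (s n)) (w, c mod p)"
        using wc by auto
      then show "z \<in> (\<lambda>(w,c). w + nmul c (s n)) ` (W n \<times> {..<p})" by blast
    qed
    moreover have "finite (W n \<times> {..<p})" using Suc by simp
    ultimately show ?case using finite_subset by blast
  qed
  have sSi: "s n \<in> Si j" and snW: "s n \<notin> W n" for n using spec finW by auto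
  have sS: "nmul p (s n) = 0" for n using sSi unfolding Si_def S_def by blast
  have sinS: "s n \<in> S" for n using sS unfolding S_def by blast
  have Cont: "(\<Sum>i<n. nmul (d i) (s i)) + t \<in> W n" if t: "t \<in> Si (Suc j)" for n d t
  proof (induction n)
    case 0 then show ?case using t W0 by simp
  next
    case (Suc n)
    have "(\<Sum>i<Suc n. nmul (d i) (s i)) + t = ((\<Sum>i<n. nmul (d i) (s i)) + t) + nmul (d n) (s n)"
      by (simp add: algebra_simps)
    then show ?case unfolding WSuc using Suc by blast
  qed
  have Ind: "p dvd d i" if "(\<Sum>i<n. nmul (d i) (s i)) \<in> PJ" "i < n" for n d i
    using that
  proof (induction n arbitrary: i)
    case 0 then show ?case by simp
  next
    case (Suc n)
    define X where "X = (\<Sum>i<n. nmul (d i) (s i))"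
    define Y where "Y = X + nmul (d n) (s n)"
    have YPJ: "Y \<in> PJ" using Suc.prems(1) unfolding Y_def X_def by simp
    have XS: "X \<in> S" unfolding X_def by (rule subgrp_sum[OF Ssg]) (rule subgrp_nmul[OF Ssg sinS])
    have YS: "Y \<in> S" unfolding Y_def using subgrp_add[OF Ssg XS subgrp_nmul[OF Ssg sinS]] .
    have dn: "p dvd d n"
    proof (rule ccontr)
      assume nd: "\<not> p dvd d n"
      then have "coprime p (d n)" using prime_imp_coprime[OF p] by blast
      then have "coprime (d n) p" by (simp add: coprime_commute)
      then obtain v where v: "nmul (d n * v) (s n) = s n" using nmul_inv[OF sS] by blast
      have "s n = nmul (v * d n) (s n)" using v by (simp add: mult.commute)
      also have "\<dots> = nmul v (Y - X)" unfolding Y_def by (simp add: nmul_mult)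
      also have "\<dots> = nmul v Y + - nmul v X" by (simp add: nmul_diff)
      also have "- nmul v X = (\<Sum>i<n. nmul ((p-1)*(v * d i)) (s i))"
      proof -
        have "- nmul v X = (\<Sum>i<n. - nmul (v * d i) (s i))"
          unfolding X_def nmul_sum sum_negf by (simp add: nmul_mult)
        also have "\<dots> = (\<Sum>i<n. nmul ((p-1)*(v * d i)) (s i))"
          using nmul_neg_mult[OF sS] p1 by simp
        finally show ?thesis .
      qed
      finally have "s n = (\<Sum>i<n. nmul ((p-1)*(v * d i)) (s i)) + nmul v Y" by (simp add: add.commute)
      moreover have "nmul v Y \<in> Si (Suc j)" using subgrp_nmul[OF Sisg] YS YPJ SiJ by blast
      ultimately have "s n \<in> W n" using Cont[where t="nmul v Y" and n=n and d="\<lambda>i. (p-1)*(v * d i)"] by simp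
      then show False using snW by blast
    qed
    have "nmul (d n) (s n) = 0" using nmul_kill_dvd[OF sS dn] .
    then have "X \<in> PJ" using YPJ unfolding Y_def by simp
    then have "\<forall>i<n. p dvd d i" using Suc.IH unfolding X_def by blast
    then show ?case using dn Suc.prems(2) less_Suc_eq by auto
  qed
  have "\<exists>y. nmul (p^j) y = s i" for i
  proof -
    have "s i \<in> range (nmul (p^j))" using sSi[of i] unfolding Si_def by blast
    then show ?thesis by (metis rangeE)
  qed
  define x where "x i = (SOME y. nmul (p^j) y = s i)" for i
  have xs: "nmul (p^j) (x i) = s i" for i unfolding x_def using someI_ex[OF \<open>\<exists>y. nmul (p^j) y = s i\<close>] .
  define P where "P = p^Suc j"
  have P1: "P \<ge> 1" unfolding P_def using p1 by simp
  have killx: "nmul P (x i) = 0" for i unfolding P_def power_Suc nmul_mult xs using sS .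
  define lin where "lin N m = (\<Sum>i<N. nmul (m i) (x i))" for N and m :: "nat \<Rightarrow> nat"
  define lin' where "lin' N m = (\<Sum>i<N. nmul (m i) (x (Suc i)))" for N and m :: "nat \<Rightarrow> nat"
  have K: "P dvd m i" if a: "lin N m \<in> PJ" and i: "i < N" for N m i
  proof (rule ccontr)
    assume ni: "\<not> P dvd m i"
    define R where "R r = (\<forall>l<N. p^r dvd m l)" for r
    have "R 0" unfolding R_def by simp
    moreover have "\<not> R (Suc j)" unfolding R_def using ni i P_def by blast
    ultimately obtain r where r: "r < Suc j" "R r" "\<not> R (Suc r)"
      using transition[of R "Suc j"] by blast
    define m' where "m' l = m l div p^r" for l
    have mm: "m l = p^r * m' l" if "l < N" for l
      using r(2) that unfolding R_def m'_def by simp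
    have eq: "nmul (p^(j-r)) (lin N m) = (\<Sum>l<N. nmul (m' l) (s l))"
      unfolding lin_def nmul_sum
    proof (rule sum.cong)
      fix l assume "l \<in> {..<N}"
      then have l: "l < N" by simp
      have pp: "p^(j-r) * p^r = p^j" using r(1) by (simp add: power_add[symmetric])
      have "nmul (p^(j-r)) (nmul (m l) (x l)) = nmul (p^(j-r) * (p^r * m' l)) (x l)"
        using mm[OF l] by (simp add: nmul_mult)
      also have "p^(j-r) * (p^r * m' l) = m' l * p^j" using pp by (simp add: algebra_simps)
      also have "nmul (m' l * p^j) (x l) = nmul (m' l) (s l)" by (simp add: nmul_mult xs)
      finally show "nmul (p^(j-r)) (nmul (m l) (x l)) = nmul (m' l) (s l)" .
    qed simp
    have "nmul (p^(j-r)) (lin N m) \<in> PJ" using subgrp_nmul[OF PJsg a] .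
    then have "\<forall>l<N. p dvd m' l" using Ind unfolding eq by blast
    then have "R (Suc r)" unfolding R_def using mm by (auto simp: mult_dvd_mono)
    then show False using r(3) by blast
  qed
  have NEGx: "- nmul c (x i) = nmul ((P-1)*c) (x i)" for c i using nmul_neg_mult[OF killx P1] by simp
  have CU: "nmul (m1 i) y = nmul (m2 i) y" if e: "lin N m1 = lin N m2" and i: "i < N" and y: "nmul P y = 0"
    for N m1 m2 i y
  proof -
    have "lin N (\<lambda>l. m1 l + (P-1)*m2 l) = lin N m1 + (\<Sum>l<N. - nmul (m2 l) (x l))"
      unfolding lin_def NEGx by (simp add: nmul_add_left sum.distrib)
    also have "\<dots> = 0" unfolding sum_negf using e unfolding lin_def by simp
    finally have "lin N (\<lambda>l. m1 l + (P-1)*m2 l) \<in> PJ" using subgrp_0[OF PJsg] by simp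
    then have "P dvd m1 i + (P-1) * m2 i" using K i by blast
    then have "nmul (m1 i + (P-1) * m2 i) y = 0" using nmul_kill_dvd[OF y] by blast
    then have "nmul (m1 i) y + - nmul (m2 i) y = 0" using nmul_neg_mult[OF y P1] by (simp add: nmul_add_left)
    then show ?thesis by (simp add: add_eq_0_iff2)
  qed
  have pad: "lin N m = lin M (\<lambda>i. if i < N then m i else 0)" if "N \<le> M" for N M m
    unfolding lin_def by (rule sum.mono_neutral_cong_left) (use that in auto)
  have pad': "lin' N m = lin' M (\<lambda>i. if i < N then m i else 0)" if "N \<le> M" for N M m
    unfolding lin'_def by (rule sum.mono_neutral_cong_left) (use that in auto)
  have WD: "lin' N1 m1 = lin' N2 m2" if e: "lin N1 m1 = lin N2 m2" for N1 N2 m1 m2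
  proof -
    define M where "M = max N1 N2"
    define pm1 where "pm1 i = (if i < N1 then m1 i else 0)" for i
    define pm2 where "pm2 i = (if i < N2 then m2 i else 0)" for i
    have e1: "lin M pm1 = lin M pm2" using e pad[of N1 M m1] pad[of N2 M m2] unfolding M_def pm1_def pm2_def by simp
    have "lin' M pm1 = lin' M pm2" unfolding lin'_def
      by (rule sum.cong) (use CU[OF e1 _ killx] in auto)
    then show ?thesis using pad'[of N1 M m1] pad'[of N2 M m2] unfolding M_def pm1_def pm2_def by simp
  qed
  have linadd: "lin N m1 + lin N m2 = lin N (\<lambda>i. m1 i + m2 i)" for N m1 m2
    unfolding lin_def by (simp add: nmul_add_left sum.distrib)
  have linadd': "lin' N m1 + lin' N m2 = lin' N (\<lambda>i. m1 i + m2 i)" for N m1 m2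
    unfolding lin'_def by (simp add: nmul_add_left sum.distrib)
  define A where "A = {lin N m | N m. True}"
  have common: "\<exists>N m1 m2. a = lin N m1 \<and> b = lin N m2" if ab: "a \<in> A" "b \<in> A" for a b
  proof -
    obtain N1 m1 N2 m2 where "a = lin N1 m1" "b = lin N2 m2" using ab unfolding A_def by blast
    then have "a = lin (max N1 N2) (\<lambda>i. if i < N1 then m1 i else 0)"
       "b = lin (max N1 N2) (\<lambda>i. if i < N2 then m2 i else 0)" using pad by auto
    then show ?thesis by blast
  qed
  have linA: "lin N m \<in> A" for N m unfolding A_def by blast
  have Asg: "subgrp A" unfolding subgrp_def
  proof (intro conjI ballI)
    have "lin 0 (\<lambda>_. 0) = 0" unfolding lin_def by simp
    then show "0 \<in> A" using linA by metis
  next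
    fix a b assume "a \<in> A" "b \<in> A"
    then obtain N m1 m2 where "a = lin N m1" "b = lin N m2" using common by blast
    then show "a + b \<in> A" using linadd linA by simp
  next
    fix a assume "a \<in> A"
    then obtain N m where a: "a = lin N m" unfolding A_def by blast
    have "- a = lin N (\<lambda>i. (P-1) * m i)" unfolding a lin_def sum_negf[symmetric] NEGx ..
    then show "- a \<in> A" using linA by simp
  qed
  have "\<exists>\<rho>. retract \<rho> A"
  proof (rule summand[OF Asg p])
    show "0 < Suc j" by simp
  next
    fix a assume "a \<in> A"
    then obtain N m where a: "a = lin N m" unfolding A_def by blast
    have "nmul P (nmul (m i) (x i)) = 0" for i
      by (metis killx mult.commute nmul_mult nmul_zero)
    then show "nmul (p^Suc j) a = 0" unfolding a lin_def nmul_sum P_def[symmetric] by simp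
  next
    fix a g assume ag: "a \<in> A" "a = nmul (p^Suc j) g"
    then obtain N m where a: "a = lin N m" unfolding A_def by blast
    have "a \<in> PJ" using ag unfolding PJ_def by blast
    then have "\<forall>i<N. P dvd m i" using K a by blast
    then have "\<forall>i<N. nmul (m i) (x i) = 0" using nmul_kill_dvd[OF killx] by blast
    then show "a = 0" unfolding a lin_def by simp
  next
    fix a assume ag: "a \<in> A" "nmul (p^(Suc j - 1)) a = 0"
    then obtain N m where a: "a = lin N m" unfolding A_def by blast
    have "nmul (p^j) a = lin N (\<lambda>i. p^j * m i)" unfolding a lin_def nmul_sum by (simp add: nmul_mult)
    then have "lin N (\<lambda>i. p^j * m i) \<in> PJ" using ag(2) subgrp_0[OF PJsg] by simp
    then have "P dvd p^j * m i" if "i < N" for i using K that by blast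
    then have dv: "p dvd m i" if "i < N" for i using that p1 unfolding P_def power_Suc2 by simp
    have "nmul p (lin N (\<lambda>i. m i div p)) = a" unfolding a lin_def nmul_sum
    proof (rule sum.cong)
      fix i assume "i \<in> {..<N}"
      then have "p * (m i div p) = m i" using dv by simp
      then show "nmul p (nmul (m i div p) (x i)) = nmul (m i) (x i)" by (simp add: nmul_mult[symmetric])
    qed simp
    then show "\<exists>a'\<in>A. a = nmul p a'" using linA by metis
  qed
  then obtain \<rho> where \<rho>: "retract \<rho> A" by blast
  have \<rho>add: "additive_map \<rho>" and \<rho>id: "\<And>a. a \<in> A \<Longrightarrow> \<rho> a = a" and \<rho>r: "\<And>g. \<rho> g \<in> A"
    using \<rho> unfolding retract_def by auto
  define sh where "sh a = (SOME b. \<exists>N m. a = lin N m \<and> b = lin' N m)" for a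
  have shlin: "sh (lin N m) = lin' N m" for N m
  proof -
    have "\<exists>b. \<exists>N' m'. lin N m = lin N' m' \<and> b = lin' N' m'" by blast
    then have "\<exists>N' m'. lin N m = lin N' m' \<and> sh (lin N m) = lin' N' m'"
      unfolding sh_def by (rule someI_ex)
    then show ?thesis using WD by metis
  qed
  define f where "f g = sh (\<rho> g)" for g
  have flin: "f (lin N m) = lin' N m" for N m unfolding f_def using \<rho>id[OF linA] shlin by simp
  have fadd: "additive_map f" unfolding additive_map_def
  proof (intro allI)
    fix a b
    obtain N m1 m2 where e: "\<rho> a = lin N m1" "\<rho> b = lin N m2" using common[OF \<rho>r \<rho>r] by blast
    have "f (a + b) = sh (\<rho> a + \<rho> b)" unfolding f_def using \<rho>add unfolding additive_map_def by simp
    also have "\<dots> = lin' N (\<lambda>i. m1 i + m2 i)" unfolding e linadd shlin ..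
    also have "\<dots> = f a + f b" unfolding f_def e shlin linadd' ..
    finally show "f (a + b) = f a + f b" .
  qed
  define Bk where "Bk k = {lin N m | N m. \<forall>i<k. m i = 0}" for k
  have shift: "lin' N m \<in> Bk (Suc k)" if "\<forall>i<k. m i = 0" for N m k
  proof -
    define m2 where "m2 i = (case i of 0 \<Rightarrow> 0 | Suc l \<Rightarrow> m l)" for i
    have e1: "lin' N m = lin (Suc N) m2" unfolding lin_def lin'_def sum.lessThan_Suc_shift m2_def by simp
    have e2: "\<forall>i<Suc k. m2 i = 0" using that unfolding m2_def by (auto split: nat.split)
    show ?thesis unfolding Bk_def
      by (intro CollectI exI[of _ "Suc N"] exI[of _ m2] conjI e1 e2)
  qed
  have iter: "(f ^^ Suc n) g \<in> Bk (Suc n)" for n g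
  proof (induction n)
    case 0
    obtain N m where "\<rho> g = lin N m" using \<rho>r unfolding A_def by blast
    then have "f g = lin' N m" unfolding f_def using shlin by simp
    then show ?case using shift[of 0 m N] by simp
  next
    case (Suc n)
    then obtain N m where e: "(f ^^ Suc n) g = lin N m" "\<forall>i<Suc n. m i = 0" unfolding Bk_def by blast
    have "(f ^^ Suc (Suc n)) g = f ((f ^^ Suc n) g)" by simp
    also have "\<dots> = lin' N m" unfolding e flin ..
    finally show ?case using shift[OF e(2)] by simp
  qed
  define dl where "dl i l = (if l = i then 1 else 0 :: nat)" for i l :: nat
  have xlin: "lin (Suc i) (dl i) = x i" for i
  proof -
    have "lin (Suc i) (dl i) = (\<Sum>l<Suc i. if l = i then x l else 0)"
      unfolding lin_def dl_def by (rule sum.cong) auto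
    then show ?thesis by simp
  qed
  have xlin': "lin' (Suc i) (dl i) = x (Suc i)" for i
  proof -
    have "lin' (Suc i) (dl i) = (\<Sum>l<Suc i. if l = i then x (Suc l) else 0)"
      unfolding lin'_def dl_def by (rule sum.cong) auto
    then show ?thesis by simp
  qed
  have fx: "f (x i) = x (Suc i)" for i using flin[of "Suc i" "dl i"] xlin xlin' by simp
  have fpow: "(f ^^ n) (x 0) = x n" for n by (induction n) (auto simp: fx)
  have W0n: "0 \<in> W n" for n using Cont[where t=0 and n=n and d="\<lambda>_. 0"] subgrp_0[OF Sisg] by simp
  have xn0: "x n \<noteq> 0" for n
  proof
    assume "x n = 0"
    then have "s n = 0" using xs[of n] by simp
    then show False using snW W0n by metis
  qed
  have notin: "x n \<notin> range (f ^^ Suc n)" for n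
  proof
    assume "x n \<in> range (f ^^ Suc n)"
    then obtain g where "x n = (f ^^ Suc n) g" by blast
    then have "x n \<in> Bk (Suc n)" using iter[of n g] by simp
    then obtain N m where e: "x n = lin N m" "\<forall>i<Suc n. m i = 0" unfolding Bk_def by blast
    define M where "M = max N (Suc n)"
    have le1: "Suc n \<le> M" and le2: "N \<le> M" and nM: "n < M" unfolding M_def by auto
    have "lin M (\<lambda>i. if i < Suc n then dl n i else 0) = lin (Suc n) (dl n)" by (rule pad[OF le1, symmetric])
    also have "\<dots> = x n" by (rule xlin)
    also have "\<dots> = lin N m" by (rule e(1))
    also have "\<dots> = lin M (\<lambda>i. if i < N then m i else 0)" by (rule pad[OF le2])
    finally have h: "lin M (\<lambda>i. if i < Suc n then dl n i else 0) = lin M (\<lambda>i. if i < N then m i else 0)" .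
    have "nmul ((\<lambda>i. if i < Suc n then dl n i else 0) n) (x n) = nmul ((\<lambda>i. if i < N then m i else 0) n) (x n)"
      by (rule CU[OF h nM killx])
    moreover have "m n = 0" using e(2) by simp
    then have "(if n < N then m n else 0) = 0" by simp
    ultimately have "x n = 0" unfolding dl_def by simp
    then show False using xn0 by simp
  qed
  obtain n where "range (f ^^ n) = range (f ^^ Suc n)"
    using sch fadd unfolding strongly_co_Hopfian_def by blast
  moreover have "x n \<in> range (f ^^ n)" using fpow[of n] by (metis rangeI)
  ultimately show False using notin by blast
qed

lemma subgrp_torsion: "subgrp (torsion_part :: 'a::ab_group_add set)"
  unfolding subgrp_def torsion_part_def
proof (intro conjI ballI)
  show "0 \<in> {x::'a. \<exists>n>0. nmul n x = 0}" by (auto intro!: exI[of _ 1])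
next
  fix x y :: 'a assume "x \<in> {x. \<exists>n>0. nmul n x = 0}" "y \<in> {x. \<exists>n>0. nmul n x = 0}"
  then obtain a b where ab: "a > 0" "nmul a x = 0" "b > 0" "nmul b y = 0" by blast
  have "nmul (b*a) x = 0" using ab by (simp add: nmul_mult)
  moreover have "nmul (a*b) y = 0" using ab by (simp add: nmul_mult)
  ultimately have "nmul (a*b) (x + y) = 0" by (simp add: nmul_add_right mult.commute)
  moreover have "a * b > 0" using ab by simp
  ultimately show "x + y \<in> {x. \<exists>n>0. nmul n x = 0}" by blast
next
  fix x :: 'a assume "x \<in> {x. \<exists>n>0. nmul n x = 0}"
  then obtain a where "a > 0" "nmul a x = 0" by blast
  then show "- x \<in> {x. \<exists>n>0. nmul n x = 0}" by (auto simp: nmul_neg)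
qed

lemma ppart_torsion: assumes p: "prime p" shows "ppart p \<subseteq> (torsion_part :: 'a::ab_group_add set)"
proof
  fix x :: 'a assume "x \<in> ppart p"
  then obtain k where k: "nmul (p^k) x = 0" unfolding ppart_def by blast
  have "p^k > 0" using prime_gt_0_nat[OF p] by simp
  then show "x \<in> torsion_part" unfolding torsion_part_def using k by blast
qed

lemma kill_coprime_ppart:
  assumes p: "prime p" and z: "z \<in> ppart p" and M: "nmul M z = 0" and nd: "\<not> p dvd M"
  shows "z = 0"
proof -
  obtain a where a: "nmul (p^a) z = 0" using z unfolding ppart_def by blast
  have "coprime p M" using prime_imp_coprime[OF p nd] .
  then have "coprime (p^a) M" by simp
  then show ?thesis using nmul_coprime_kill[OF a M] by blast
qed

theorem main_embed:
  assumes red: "reduced_grp TYPE('a::ab_group_add)"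
    and sch: "strongly_co_Hopfian TYPE('a)"
  shows "\<exists>H :: (nat \<Rightarrow> 'a) set. subgrp H \<and> sumT \<subseteq> H \<and> H \<subseteq> prodT
          \<and> quot_torsion_free H sumT \<and> quot_divisible H sumT \<and> isomorphic_to TYPE('a) H
          \<and> pure_in H prodT"
proof -
  have exR: "\<exists>\<rho>. retract \<rho> (ppart p :: 'a set)" if p: "prime p" for p
  proof (rule finite_retract[OF p Tp_finite[OF sch red p] subgrp_ppart])
    show "\<forall>b\<in>(ppart p :: 'a set). \<exists>k. nmul (p^k) b = 0" unfolding ppart_def by blast
    show "\<forall>b\<in>(ppart p :: 'a set). \<forall>r g. b = nmul (p^r) g \<longrightarrow> (\<exists>b'\<in>ppart p. b = nmul (p^r) b')"
    proof (intro ballI allI impI)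
      fix b :: 'a and r g assume b: "b \<in> ppart p" "b = nmul (p^r) g"
      obtain a where "nmul (p^a) b = 0" using b(1) unfolding ppart_def by blast
      then have "nmul (p^(a+r)) g = 0" using b(2) by (simp add: power_add nmul_mult)
      then have "g \<in> ppart p" unfolding ppart_def by blast
      then show "\<exists>b'\<in>ppart p. b = nmul (p^r) b'" using b(2) by blast
    qed
  qed
  define R where "R p = (SOME \<rho>. retract \<rho> (ppart p :: 'a set))" for p
  have Rret: "retract (R p) (ppart p)" if "prime p" for p
    unfolding R_def using someI_ex[OF exR[OF that]] .
  have Radd: "additive_map (R p)" if "prime p" for p using Rret[OF that] unfolding retract_def by blast
  have Rid: "R p y = y" if "prime p" "y \<in> ppart p" for p y using Rret[OF that(1)] that(2) unfolding retract_def by blast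
  have Rr: "R p y \<in> ppart p" if "prime p" for p y using Rret[OF that] unfolding retract_def by blast
  have Rkill: "R p y = 0" if p: "prime p" and y: "nmul M y = 0" and nd: "\<not> p dvd M" for p M y
  proof -
    have "nmul M (R p y) = 0" using additive_nmul[OF Radd[OF p], of M y] y additive_0[OF Radd[OF p]] by simp
    then show ?thesis using kill_coprime_ppart[OF p Rr[OF p] _ nd] by blast
  qed
  have Rcross: "R p (R q y) = (if q = p then R p y else 0)" if p: "prime p" and q: "prime q" for p q y
  proof (cases "q = p")
    case True then show ?thesis using Rid[OF p Rr[OF p]] by simp
  next
    case False
    obtain a where a: "nmul (q^a) (R q y) = 0" using Rr[OF q] unfolding ppart_def by blast
    have "\<not> p dvd q^a" using p q False by (metis prime_dvd_power primes_dvd_imp_eq)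
    then show ?thesis using Rkill[OF p a] False by simp
  qed
  have L3: "w = 0" if "nmul M w = 0" "M > 0" "\<forall>p. prime p \<longrightarrow> R p w = 0" for M w
    using that
  proof (induction M arbitrary: w rule: less_induct)
    case (less M)
    show ?case
    proof (cases "M = 1")
      case True then show ?thesis using less.prems by simp
    next
      case False
      then obtain q where q: "prime q" "q dvd M" using prime_factor_nat by blast
      then obtain M1 where M1: "M = q * M1" by blast
      have q1: "q > 1" using q(1) prime_gt_1_nat by blast
      have M10: "M1 > 0" using M1 less.prems(2) by (cases M1) auto
      have "M1 < M" using M1 q1 M10 by simp
      define w' where "w' = nmul M1 w"
      have "nmul (q^1) w' = 0" unfolding w'_def using less.prems(1) M1 by (simp add: nmul_mult)
      then have "w' \<in> ppart q" unfolding ppart_def by blast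
      then have "w' = R q w'" using Rid[OF q(1)] by simp
      also have "\<dots> = nmul M1 (R q w)" unfolding w'_def by (rule additive_nmul[OF Radd[OF q(1)]])
      also have "\<dots> = 0" using less.prems(3) q(1) by simp
      finally have "nmul M1 w = 0" unfolding w'_def .
      then show ?thesis using less.IH[OF \<open>M1 < M\<close> _ M10] less.prems(3) by blast
    qed
  qed
  define \<phi> where "\<phi> g = (\<lambda>q. if prime q then R q g else 0)" for g :: 'a
  have \<phi>add: "additive_map \<phi>" unfolding additive_map_def
  proof (intro allI)
    fix a b
    show "\<phi> (a + b) = \<phi> a + \<phi> b" unfolding \<phi>_def plus_fun_def
      using Radd unfolding additive_map_def by (intro ext) simp
  qed
  have \<phi>app: "\<phi> g q = (if prime q then R q g else 0)" for g q unfolding \<phi>_def by simp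
  have \<phi>prod: "\<phi> g \<in> prodT" for g unfolding prodT_def \<phi>app using Rr by simp
  have suppfin: "h \<in> sumT" if "h \<in> prodT" "\<And>p. \<not> p dvd M \<Longrightarrow> h p = 0" "M > 0" for h M
  proof -
    have "{p. h p \<noteq> 0} \<subseteq> {p. p dvd M}" using that(2) by blast
    moreover have "finite {p. p dvd M}" using that(3) by (simp add: finite_divisors_nat)
    ultimately have "finite {p. h p \<noteq> 0}" by (rule finite_subset)
    then show ?thesis unfolding sumT_def using that(1) by simp
  qed
  have \<phi>tor: "\<phi> t \<in> sumT" if tt: "t \<in> torsion_part" for t
  proof -
    obtain M where M: "M > 0" "nmul M t = 0" using tt unfolding torsion_part_def by blast
    show ?thesis
    proof (rule suppfin[OF \<phi>prod _ M(1)])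
      fix p assume nd: "\<not> p dvd M"
      show "\<phi> t p = 0"
      proof (cases "prime p")
        case True then show ?thesis unfolding \<phi>app using Rkill[OF True M(2) nd] by simp
      qed (simp add: \<phi>app)
    qed
  qed
  have sum_pre: "\<exists>t\<in>torsion_part. \<phi> t = h" if h: "h \<in> sumT" for h
  proof -
    define F where "F = {p. h p \<noteq> 0}"
    have finF: "finite F" using h unfolding sumT_def F_def by blast
    have hp: "prime p \<Longrightarrow> h p \<in> ppart p" "\<not> prime p \<Longrightarrow> h p = 0" for p
      using h unfolding sumT_def prodT_def by auto
    have Fp: "p \<in> F \<Longrightarrow> prime p" for p using hp(2) unfolding F_def by blast
    define t where "t = (\<Sum>q\<in>F. h q)"
    have "t \<in> torsion_part" unfolding t_def
      by (rule subgrp_sum[OF subgrp_torsion]) (use ppart_torsion hp(1) Fp in blast)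
    moreover have "\<phi> t = h"
    proof
      fix p show "\<phi> t p = h p"
      proof (cases "prime p")
        case True
        have "R p t = (\<Sum>q\<in>F. R p (h q))" unfolding t_def by (rule additive_sum[OF Radd[OF True]])
        also have "\<dots> = (\<Sum>q\<in>F. if q = p then h p else 0)"
        proof (rule sum.cong)
          fix q assume "q \<in> F"
          then have "prime q" using Fp by blast
          have "R p (h q) = R p (R q (h q))" using Rid[OF \<open>prime q\<close> hp(1)[OF \<open>prime q\<close>]] by simp
          also have "\<dots> = (if q = p then R p (h q) else 0)" using Rcross[OF True \<open>prime q\<close>] by simp
          also have "\<dots> = (if q = p then h p else 0)" using Rid[OF True hp(1)[OF True]] by simp
          finally show "R p (h q) = (if q = p then h p else 0)" .
        qed simp
        also have "\<dots> = h p" using finF unfolding F_def by simp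
        finally show ?thesis unfolding \<phi>app using True by simp
      next
        case False then show ?thesis unfolding \<phi>app using hp(2) by simp
      qed
    qed
    ultimately show ?thesis by blast
  qed
  define K where "K = {g :: 'a. \<forall>p. prime p \<longrightarrow> R p g = 0}"
  have Ksg: "subgrp K" unfolding subgrp_def
  proof (intro conjI ballI)
    show "0 \<in> K" unfolding K_def using additive_0[OF Radd] by simp
  next
    fix a b assume "a \<in> K" "b \<in> K"
    then show "a + b \<in> K" unfolding K_def using Radd unfolding additive_map_def by simp
  next
    fix a assume "a \<in> K"
    then show "- a \<in> K" unfolding K_def using additive_neg[OF Radd] by simp
  qed
  have Kdiv: "\<exists>y\<in>K. nmul n y = g" if g: "g \<in> K" and n: "n > 0" for g n
  proof -
    obtain y where y: "nmul n y - g \<in> torsion_part" using sch_div[OF sch n] by blast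
    define t where "t = nmul n y - g"
    obtain M where M: "M > 0" "nmul M t = 0" using y unfolding t_def torsion_part_def by blast
    define F where "F = {q. prime q \<and> q dvd (n*M)}"
    have finF: "finite F" unfolding F_def using n M(1) by (simp add: finite_divisors_nat)
    define s where "s = (\<Sum>q\<in>F. R q y)"
    define y' where "y' = y - s"
    have Rpy: "R p y = 0" if p: "prime p" "p \<notin> F" for p
    proof -
      have nd: "\<not> p dvd n" "\<not> p dvd M" using p unfolding F_def by auto
      have "nmul n (R p y) - R p g = R p t"
        unfolding t_def additive_diff[OF Radd[OF p(1)]] additive_nmul[OF Radd[OF p(1)]] ..
      moreover have "R p g = 0" using g p(1) unfolding K_def by blast
      moreover have "R p t = 0" using Rkill[OF p(1) M(2) nd(2)] .
      ultimately have "nmul n (R p y) = 0" by simp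
      then show ?thesis using kill_coprime_ppart[OF p(1) Rr[OF p(1)] _ nd(1)] by blast
    qed
    have y'K: "y' \<in> K" unfolding K_def mem_Collect_eq
    proof (intro allI impI)
      fix p :: nat assume p: "prime p"
      have "R p s = (\<Sum>q\<in>F. R p (R q y))" unfolding s_def by (rule additive_sum[OF Radd[OF p]])
      also have "\<dots> = (\<Sum>q\<in>F. if q = p then R p y else 0)"
      proof (rule sum.cong)
        fix q assume "q \<in> F"
        then have q: "prime q" unfolding F_def by blast
        show "R p (R q y) = (if q = p then R p y else 0)" by (rule Rcross[OF p q])
      qed simp
      also have "\<dots> = (if p \<in> F then R p y else 0)" using finF by simp
      finally have "R p s = (if p \<in> F then R p y else 0)" .
      then show "R p y' = 0" unfolding y'_def additive_diff[OF Radd[OF p]] using Rpy p by auto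
    qed
    define w where "w = nmul n y' - g"
    have sT: "s \<in> torsion_part" unfolding s_def
      by (rule subgrp_sum[OF subgrp_torsion]) (use ppart_torsion Rr F_def in blast)
    have "w = t - nmul n s" unfolding w_def t_def y'_def by (simp add: nmul_diff)
    then have wT: "w \<in> torsion_part"
      using subgrp_diff[OF subgrp_torsion y[folded t_def] subgrp_nmul[OF subgrp_torsion sT]] by simp
    have "\<forall>p. prime p \<longrightarrow> R p w = 0"
    proof (intro allI impI)
      fix p :: nat assume p: "prime p"
      show "R p w = 0" unfolding w_def additive_diff[OF Radd[OF p]] additive_nmul[OF Radd[OF p]]
        using y'K g p unfolding K_def by simp
    qed
    then have "w = 0" using L3 wT unfolding torsion_part_def by blast
    then have "nmul n y' = g" unfolding w_def by simp
    then show ?thesis using y'K by blast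
  qed
  have "divisible_subgrp K" unfolding divisible_subgrp_def using Ksg Kdiv by blast
  then have K0: "K = {0}" using red unfolding reduced_grp_def by blast
  have \<phi>inj: "inj \<phi>"
  proof (rule injI)
    fix a b assume e: "\<phi> a = \<phi> b"
    have "a - b \<in> K" unfolding K_def mem_Collect_eq
    proof (intro allI impI)
      fix p :: nat assume p: "prime p"
      have "\<phi> a p = \<phi> b p" using e by simp
      then have "R p a = R p b" unfolding \<phi>app using p by simp
      then show "R p (a - b) = 0" unfolding additive_diff[OF Radd[OF p]] by simp
    qed
    then show "a = b" using K0 by simp
  qed
  define H where "H = range \<phi>"
  have Hsg: "subgrp H" unfolding H_def by (rule subgrp_range[OF \<phi>add])
  have sumH: "sumT \<subseteq> H" unfolding H_def using sum_pre by blast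
  have Hprod: "H \<subseteq> prodT" unfolding H_def using \<phi>prod by blast
  have \<phi>nmul: "\<phi> (nmul n g) = nmul n (\<phi> g)" for n g by (rule additive_nmul[OF \<phi>add])
  have tf: "quot_torsion_free H sumT" unfolding quot_torsion_free_def
  proof (intro ballI allI impI)
    fix x and n :: nat assume x: "x \<in> H" and n: "0 < n" and nx: "nmul n x \<in> sumT"
    obtain g where g: "x = \<phi> g" using x unfolding H_def by blast
    obtain t where t: "t \<in> torsion_part" "\<phi> t = nmul n x" using sum_pre[OF nx] by blast
    have "\<phi> (nmul n g) = \<phi> t" unfolding \<phi>nmul g t(2) ..
    then have "nmul n g = t" using \<phi>inj by (simp add: inj_eq)
    then obtain M where M: "M > 0" "nmul M (nmul n g) = 0" using t(1) unfolding torsion_part_def by blast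
    then have "nmul (M*n) g = 0" by (simp add: nmul_mult)
    moreover have "M * n > 0" using M(1) n by simp
    ultimately have "g \<in> torsion_part" unfolding torsion_part_def by blast
    then show "x \<in> sumT" using \<phi>tor g by simp
  qed
  have dv: "quot_divisible H sumT" unfolding quot_divisible_def
  proof (intro ballI allI impI)
    fix x and n :: nat assume x: "x \<in> H" and n: "0 < n"
    obtain g where g: "x = \<phi> g" using x unfolding H_def by blast
    obtain y where y: "nmul n y - g \<in> torsion_part" using sch_div[OF sch n] by blast
    have "nmul n (\<phi> y) - x = \<phi> (nmul n y - g)" unfolding g additive_diff[OF \<phi>add] \<phi>nmul ..
    then have "nmul n (\<phi> y) - x \<in> sumT" using \<phi>tor[OF y] by simp
    moreover have "\<phi> y \<in> H" unfolding H_def by simp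
    ultimately show "\<exists>y\<in>H. nmul n y - x \<in> sumT" by blast
  qed
  have iso: "isomorphic_to TYPE('a) H" unfolding isomorphic_to_def H_def using \<phi>add \<phi>inj by blast
  have pure: "pure_in H prodT" unfolding pure_in_def
  proof (intro allI impI)
    fix n :: nat and x assume a: "x \<in> H \<and> (\<exists>y\<in>prodT. x = nmul n y)"
    then obtain y where y: "y \<in> prodT" "x = nmul n y" by blast
    obtain g where g: "x = \<phi> g" using a unfolding H_def by blast
    show "\<exists>z\<in>H. x = nmul n z"
    proof (cases "n = 0")
      case True
      then have "x = nmul n 0" using y(2) by simp
      then show ?thesis using subgrp_0[OF Hsg] by blast
    next
      case False
      then have n: "n > 0" by simp
      obtain g' where g': "nmul n g' - g \<in> torsion_part" using sch_div[OF sch n] by blast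
      obtain M where M: "M > 0" "nmul M (nmul n g' - g) = 0" using g' unfolding torsion_part_def by blast
      define w where "w = y - \<phi> g'"
      have wapp: "w p = y p - \<phi> g' p" for p unfolding w_def by simp
      have wprod: "w \<in> prodT" unfolding prodT_def mem_Collect_eq
      proof (intro allI conjI impI)
        fix p :: nat assume p: "prime p"
        have "y p \<in> ppart p" using y(1) p unfolding prodT_def by blast
        moreover have "\<phi> g' p \<in> ppart p" using \<phi>prod p unfolding prodT_def by blast
        ultimately show "w p \<in> ppart p" unfolding wapp by (rule subgrp_diff[OF subgrp_ppart])
      next
        fix p :: nat assume p: "\<not> prime p"
        then show "w p = 0" unfolding wapp \<phi>app using y(1) unfolding prodT_def by simp
      qed
      have nw: "nmul n w = \<phi> (g - nmul n g')"
        unfolding w_def additive_diff[OF \<phi>add] \<phi>nmul nmul_diff using y(2) g by simp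
      have "w \<in> sumT"
      proof (rule suppfin[OF wprod _ ])
        show "n * M > 0" using n M(1) by simp
      next
        fix p :: nat assume nd: "\<not> p dvd n * M"
        show "w p = 0"
        proof (cases "prime p")
          case False then show ?thesis using wprod unfolding prodT_def by blast
        next
          case True
          have "nmul n (w p) = \<phi> (g - nmul n g') p" unfolding nw[symmetric] nmul_fun by simp
          also have "\<dots> = R p (g - nmul n g')" unfolding \<phi>app using True by simp
          also have "\<dots> = 0"
          proof (rule Rkill[OF True])
            show "nmul M (g - nmul n g') = 0" using M(2)
              by (metis add.inverse_neutral minus_diff_eq nmul_neg)
            show "\<not> p dvd M" using nd by auto
          qed
          finally have "nmul n (w p) = 0" .
          moreover have "w p \<in> ppart p" using wprod True unfolding prodT_def by blast
          moreover have "\<not> p dvd n" using nd by auto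
          ultimately show ?thesis using kill_coprime_ppart[OF True] by blast
        qed
      qed
      then have wH: "w \<in> H" using sumH by blast
      define z where "z = \<phi> g' + w"
      have "z \<in> H" unfolding z_def using subgrp_add[OF Hsg _ wH] unfolding H_def by blast
      moreover have "nmul n z = x"
      proof -
        have "nmul n z = \<phi> (nmul n g') + \<phi> (g - nmul n g')" unfolding z_def nmul_add_right \<phi>nmul nw ..
        also have "\<dots> = \<phi> g" unfolding additive_diff[OF \<phi>add] by simp
        finally show ?thesis using g by simp
      qed
      ultimately show ?thesis by metis
    qed
  qed
  show ?thesis using Hsg sumH Hprod tf dv iso pure by blast
qed

theorem mainTheorem3:
  assumes "reduced_grp TYPE('a::ab_group_add)"
    and "strongly_co_Hopfian TYPE('a)"
  shows "(\<forall>p. prime p \<longrightarrow> finite (ppart p :: 'a set))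
    \<and> (\<exists>H :: (nat \<Rightarrow> 'a) set. subgrp H \<and> sumT \<subseteq> H \<and> H \<subseteq> prodT
          \<and> quot_torsion_free H sumT \<and> quot_divisible H sumT \<and> isomorphic_to TYPE('a) H)
    \<and> (infinite {p. prime p \<and> (ppart p :: 'a set) \<noteq> {0}} \<longrightarrow> sp_group TYPE('a))"
proof -
  have fin: "\<forall>p. prime p \<longrightarrow> finite (ppart p :: 'a set)"
    using Tp_finite[OF assms(2) assms(1)] by blast
  obtain H :: "(nat \<Rightarrow> 'a) set" where H: "subgrp H" "sumT \<subseteq> H" "H \<subseteq> prodT"
      "quot_torsion_free H sumT" "quot_divisible H sumT" "isomorphic_to TYPE('a) H" "pure_in H prodT"
    using main_embed[OF assms(1) assms(2)] by blast
  have sp: "infinite {p. prime p \<and> (ppart p :: 'a set) \<noteq> {0}} \<longrightarrow> sp_group TYPE('a)"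
    unfolding sp_group_def using H by blast
  show ?thesis using fin H sp by blast
qed

end
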